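(* Let $\mathbf k$ be a commutative ring with identity and $X$ a set, with $\Delta$ and $\mathcal N^{(n)}$ as in the context. Then for every $n\ge0$, $$\Delta(\mathcal N^{(n)})\subseteq\big(\mathcal N^{(0)}\otimes\mathcal N^{(n)}\big)\oplus\Big(\bigoplus_{p+q=n,\ p>0,\ q>0}\mathcal N^{(p)}\otimes\mathcal N^{(q)}\Big).$$
   Context: Let $M(X)$ be the free monoid on $X$ with identity $\mathbf 1$ and $S(X)=M(X)\setminus\{\mathbf 1\}$. For a set $Y$ write $\lfloor Y\rfloor=\{\lfloor y\rfloor: y\in Y\}$ for a disjoint copy of $Y$. Bracketed words: $\mathfrak M_0=M(X)$, $\mathfrak M_{n+1}=M(X\sqcup\lfloor\mathfrak M_n\rfloor)$, $\mathfrak M(X)=\bigcup_n\mathfrak M_n$ (monoid under concatenation); $\mathrm{dep}(w)$ is the least $n$ with $w\in\mathfrak M_n$; every $w\ne\mathbf 1$ has a unique standard decomposition $w=w_1\cdots w_m$ with factors alternately in $S(X)$ and $\lfloor\mathfrak M(X)\rfloor$ ($m$ = breadth). $\mathfrak X_0=M(X)$; for $n\ge1$, $\mathfrak X_n$ consists of $\mathbf 1$ and all words $w_1\cdots w_m$ ($m\ge1$) with factors alternately in $S(X)$ and $\lfloor\mathfrak X_{n-1}\rfloor$; $\mathfrak X_\infty=\bigcup_n\mathfrak X_n$. $\mathcal N(X)=\mathbf k\mathfrak X_\infty$ (free $\mathbf k$-module), $N_X(w)=\lfloor w\rfloor$ extended linearly (also written $\lfloor a\rfloor$). Product $\diamond$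 (bilinear, by induction on $\mathrm{dep}(w)+\mathrm{dep}(w')$): $\mathbf 1$ is the identity; for breadth-one $w,w'\ne\mathbf 1$: $w\diamond w'=ww'$ if one of them is in $S(X)$, and $\lfloor\bar w\rfloor\diamond\lfloor\bar w'\rfloor=\lfloor\lfloor\bar w\rfloor\diamond\bar w'\rfloor+\lfloor\bar w\diamond\lfloor\bar w'\rfloor\rfloor-\lfloor\lfloor\bar w\diamond\bar w'\rfloor\rfloor$; in general $w\diamond w'=w_1\cdots w_{m-1}(w_m\diamond w'_1)w'_2\cdots w'_{m'}$ for standard decompositions. $(\mathcal N(X),\diamond,N_X)$ is an associative unital algebra with identity $\mathbf 1$ and Nijenhuis operator $N_X$ (the free Nijenhuis algebra on $X$). A sequence $w_1,\dots,w_m$ in $\mathcal I:=X\sqcup\lfloor\mathfrak X_\infty\rfloor$ is alternating if for each $i$ at least one of $w_i,w_{i+1}$ lies in $X$. Every $w\in\mathfrak X_\infty\setminus\{\mathbf 1\}$ can be written uniquely as $w=w_1\diamond\cdots\diamond w_m$ (equal to the concatenation $w_1\cdots w_m$) with $w_1,\dots,w_m$ alternating in $\mathcal I$; $m=\mathrm{wid}(w)$ is the width, $\mathrm{wid}(\mathbf 1)=0$. $\mathcal N(X)\otimes\mathcal N(X)$ carries the product $(a\otimes b)\diamond(a'\otimes b')=(a\diamond a')\otimes(b\diamond b')$. The linear map $\Delta:\mathcal N(X)\to\mathcal N(X)\otimes\mathcal N(X)$ is defined on $\mathfrak X_\infty$ by induction on depth: $\Delta(\mathbf 1)=\mathbf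 1\otimes\mathbf 1$; $\Delta(x)=\mathbf 1\otimes x$ for $x\in X$; $\Delta(x_1\cdots x_m)=\Delta(x_1)\diamond\cdots\diamond\Delta(x_m)$ for $x_i\in X$, $m\ge2$; $\Delta(\lfloor\bar w\rfloor)=(\mathrm{id}\otimes N_X)\Delta(\bar w)$ for $\bar w\in\mathfrak X_\infty$; and if $w$ has $\diamond$-factorization $w=w_1\diamond\cdots\diamond w_m$ with $m\ge2$, $\Delta(w)=\Delta(w_1)\diamond\cdots\diamond\Delta(w_m)$. Grading: for $w\in\mathfrak X_\infty$, $\deg(w)=\deg_X(w)+\deg_N(w)$, where $\deg_X(w)$ is the number of occurrences of letters of $X$ in $w$ and $\deg_N(w)$ the number of occurrences of the bracket $\lfloor\ \rfloor$ (e.g. $\deg(\lfloor x\rfloor)=2$, $\deg(x\lfloor x\rfloor)=3$). Set $\mathcal N^{(n)}=\mathbf k\{w\in\mathfrak X_\infty:\deg(w)=n\}$; thus $\mathcal N(X)=\bigoplus_{n\ge0}\mathcal N^{(n)}$, $\mathcal N^{(0)}=\mathbf k\mathbf 1$, and $N_X(\mathcal N^{(n)})\subseteq\mathcal N^{(n+1)}$. *)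

theory Defs
  imports Main
begin

text \<open>A bracketed word is a list of atoms; an atom is either a letter of X or
a bracket applied to a bracketed word.  The empty list is the identity 1.\<close>

datatype 'x atom = Let 'x | Brk "'x atom list"

type_synonym 'x word = "'x atom list"

fun is_brk :: "'x atom \<Rightarrow> bool" where
  "is_brk (Let x) = False"
| "is_brk (Brk u) = True"

text \<open>Membership in the set of Nijenhuis words (no two adjacent brackets, recursively).\<close>
fun nwf :: "'x word \<Rightarrow> bool" and nwf_atom :: "'x atom \<Rightarrow> bool" where
  "nwf [] = True"
| "nwf (a # w) = (nwf_atom a \<and> nwf w \<and>
      (case w of [] \<Rightarrow> True | b # _ \<Rightarrow> \<not> (is_brk a \<and> is_brk b)))"
| "nwf_atom (Let x) = True"
| "nwf_atom (Brk u) = nwf u"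

fun ndeg :: "'x word \<Rightarrow> nat" and ndeg_atom :: "'x atom \<Rightarrow> nat" where
  "ndeg [] = 0"
| "ndeg (a # w) = ndeg_atom a + ndeg w"
| "ndeg_atom (Let x) = 1"
| "ndeg_atom (Brk u) = Suc (ndeg u)"

type_synonym ('k, 'b) lc = "('k \<times> 'b) list"

definition lc_coeff :: "('k::comm_ring_1, 'b) lc \<Rightarrow> 'b \<Rightarrow> 'k" where
  "lc_coeff L z = sum_list (map (\<lambda>(c, z'). if z' = z then c else 0) L)"

definition lc_neg :: "('k::comm_ring_1, 'b) lc \<Rightarrow> ('k, 'b) lc" where
  "lc_neg L = map (\<lambda>(c, w). (- c, w)) L"

definition lc_brk :: "('k, 'x word) lc \<Rightarrow> ('k, 'x word) lc" where
  "lc_brk L = map (\<lambda>(c, w). (c, [Brk w])) L"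

definition lc_pre :: "'x word \<Rightarrow> ('k, 'x word) lc \<Rightarrow> ('k, 'x word) lc" where
  "lc_pre p L = map (\<lambda>(c, w). (c, p @ w)) L"

definition lc_suf :: "('k, 'x word) lc \<Rightarrow> 'x word \<Rightarrow> ('k, 'x word) lc" where
  "lc_suf L s = map (\<lambda>(c, w). (c, w @ s)) L"

fun dia :: "'x word \<Rightarrow> 'x word \<Rightarrow> ('k::comm_ring_1, 'x word) lc"
and dia1 :: "'x atom \<Rightarrow> 'x word \<Rightarrow> ('k::comm_ring_1, 'x word) lc" where
  "dia [] v = [(1, v)]"
| "dia [a] v = dia1 a v"
| "dia (a # b # u) v = lc_pre [a] (dia (b # u) v)"
| "dia1 a [] = [(1, [a])]"
| "dia1 (Let x) v = [(1, Let x # v)]"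
| "dia1 (Brk a) (Let y # v) = [(1, Brk a # Let y # v)]"
| "dia1 (Brk a) (Brk b # v) =
     lc_suf (lc_brk (dia1 (Brk a) b) @ lc_brk (dia a [Brk b])
             @ lc_neg (lc_brk (lc_brk (dia a b)))) v"

text \<open>N(X) \<otimes> N(X) is the free module on pairs of words; product is \<diamond> \<otimes> \<diamond>.\<close>
definition tmul :: "('k::comm_ring_1, 'x word \<times> 'x word) lc \<Rightarrow> ('k, 'x word \<times> 'x word) lc
                    \<Rightarrow> ('k, 'x word \<times> 'x word) lc" where
  "tmul L M = concat (map (\<lambda>(c, (u, v)). concat (map (\<lambda>(d, (u', v')).
      concat (map (\<lambda>(e, u''). map (\<lambda>(f, v''). (c * d * e * f, (u'', v'')))
         (dia v v')) (dia u u'))) M)) L)"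

fun Delta :: "'x word \<Rightarrow> ('k::comm_ring_1, 'x word \<times> 'x word) lc"
and Delta_atom :: "'x atom \<Rightarrow> ('k::comm_ring_1, 'x word \<times> 'x word) lc" where
  "Delta [] = [(1, ([], []))]"
| "Delta (a # w) = tmul (Delta_atom a) (Delta w)"
| "Delta_atom (Let x) = [(1, ([], [Let x]))]"
| "Delta_atom (Brk u) = map (\<lambda>(c, (p, q)). (c, (p, [Brk q]))) (Delta u)"

text \<open>Elements of N(X) as finitely supported coefficient functions on Nijenhuis words;
 \<Delta> extended linearly; elements of the tensor square as coefficient functions on pairs.\<close>
definition DeltaN :: "('x word \<Rightarrow> 'k::comm_ring_1) \<Rightarrow> ('x word \<times> 'x word \<Rightarrow> 'k)" where
  "DeltaN a = (\<lambda>z. \<Sum>w\<in>{w. a w \<noteq> 0}. a w * lc_coeff (Delta w) z)"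

definition Ncomp :: "nat \<Rightarrow> ('x word \<Rightarrow> 'k::comm_ring_1) set" where
  "Ncomp n = {a. finite {w. a w \<noteq> 0} \<and> (\<forall>w. a w \<noteq> 0 \<longrightarrow> nwf w \<and> ndeg w = n)}"

definition tens_basis :: "nat \<Rightarrow> nat \<Rightarrow> ('x word \<times> 'x word) set" where
  "tens_basis p q = {(u, v). nwf u \<and> nwf v \<and> ndeg u = p \<and> ndeg v = q}"

definition Target :: "nat \<Rightarrow> ('x word \<times> 'x word \<Rightarrow> 'k::comm_ring_1) set" where
  "Target n = {T. finite {z. T z \<noteq> 0} \<and>
     (\<forall>z. T z \<noteq> 0 \<longrightarrow> z \<in> tens_basis 0 n \<union>
        (\<Union>{tens_basis p q | p q. p + q = n \<and> 0 < p \<and> 0 < q}))}"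

end

theory Submission
  imports Defs
begin

lemma dia_inv:
  shows "(nwf u \<longrightarrow> nwf v \<longrightarrow> (\<forall>c w. (c, w) \<in> set (dia u v :: ('k::comm_ring_1, 'x word) lc) \<longrightarrow>
      nwf w \<and> ndeg w = ndeg u + ndeg v \<and> (u \<noteq> [] \<longrightarrow> w \<noteq> [] \<and> is_brk (hd w) = is_brk (hd u))))"
   and "(nwf_atom a \<longrightarrow> nwf v' \<longrightarrow> (\<forall>c w. (c, w) \<in> set (dia1 a v' :: ('k::comm_ring_1, 'x word) lc) \<longrightarrow>
      nwf w \<and> ndeg w = ndeg_atom a + ndeg v' \<and> w \<noteq> [] \<and> is_brk (hd w) = is_brk a))"
proof (induction u v and a v' rule: dia_dia1.induct)
  case (1 v) then show ?case by auto
next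
  case (2 a v) then show ?case by auto
next
  case (3 a b u v)
  show ?case
  proof (intro impI allI)
    fix c w assume n1: "nwf (a # b # u)" and n2: "nwf v"
      and m: "(c, w) \<in> set (dia (a # b # u) v :: ('k::comm_ring_1, 'x word) lc)"
    then obtain w' where w: "w = a # w'" and m': "(c, w') \<in> set (dia (b # u) v :: ('k, 'x word) lc)"
      by (auto simp: lc_pre_def)
    have nb: "nwf (b # u)" and na: "nwf_atom a" and nab: "\<not> (is_brk a \<and> is_brk b)" using n1 by auto
    have "nwf w' \<and> ndeg w' = ndeg (b # u) + ndeg v \<and> w' \<noteq> [] \<and> is_brk (hd w') = is_brk b"
      using 3 nb n2 m' by fastforce
    then show "nwf w \<and> ndeg w = ndeg (a # b # u) + ndeg v \<and> (a # b # u \<noteq> [] \<longrightarrow> w \<noteq> [] \<and> is_brk (hd w) = is_brk (hd (a # b # u)))"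
      using w na nab by (cases w') auto
  qed
next
  case (4 a) then show ?case by auto
next
  case (5 x v) then show ?case by (cases v) auto
next
  case (6 a y v) then show ?case by auto
next
  case (7 a b v)
  show ?case
  proof (intro impI allI)
    fix c w assume na: "nwf_atom (Brk a)" and nv: "nwf (Brk b # v)"
      and m: "(c, w) \<in> set (dia1 (Brk a) (Brk b # v) :: ('k::comm_ring_1, 'x word) lc)"
    have nb: "nwf b" and nv2: "nwf v" and hv: "v = [] \<or> \<not> is_brk (hd v)"
      using nv by (auto split: list.splits)
    have vok: "\<And>w'. nwf w' \<Longrightarrow> nwf (Brk w' # v)" using nv2 hv by (auto split: list.splits)
    from m obtain w' where w: "w = Brk w' # v" and
      cs: "(\<exists>c'. (c', w') \<in> set (dia1 (Brk a) b :: ('k, 'x word) lc))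
         \<or> (\<exists>c'. (c', w') \<in> set (dia a [Brk b] :: ('k, 'x word) lc))
         \<or> (\<exists>c' w''. w' = [Brk w''] \<and> (c', w'') \<in> set (dia a b :: ('k, 'x word) lc))"
      by (auto simp: lc_suf_def lc_brk_def lc_neg_def) blast+
    have IH1: "\<And>c w. (c, w) \<in> set (dia1 (Brk a) b :: ('k, 'x word) lc) \<Longrightarrow> nwf w \<and> ndeg w = Suc (ndeg a) + ndeg b"
      using 7(1) na nb by fastforce
    have IH2: "\<And>c w. (c, w) \<in> set (dia a [Brk b] :: ('k, 'x word) lc) \<Longrightarrow> nwf w \<and> ndeg w = ndeg a + Suc (ndeg b)"
      using 7(2) na nb by fastforce
    have IH3: "\<And>c w. (c, w) \<in> set (dia a b :: ('k, 'x word) lc) \<Longrightarrow> nwf w \<and> ndeg w = ndeg a + ndeg b"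
      using 7(3) na nb by fastforce
    have "nwf w' \<and> Suc (ndeg w') = Suc (ndeg a) + Suc (ndeg b)"
      using cs IH1 IH2 IH3 by fastforce
    then show "nwf w \<and> ndeg w = ndeg_atom (Brk a) + ndeg (Brk b # v) \<and> w \<noteq> [] \<and> is_brk (hd w) = is_brk (Brk a)"
      using w vok by auto
  qed
qed

lemma dia_mem:
  assumes "nwf u" "nwf v" "(c, w) \<in> set (dia u v :: ('k::comm_ring_1, 'x word) lc)"
  shows "nwf w \<and> ndeg w = ndeg u + ndeg v"
  using dia_inv(1)[of u v] assms by blast

lemma tmul_mem:
  assumes "(c, (u, v)) \<in> set (tmul L M :: ('k::comm_ring_1, 'x word \<times> 'x word) lc)"
  shows "\<exists>c1 p q d p' q' e f. (c1, (p, q)) \<in> set L \<and> (d, (p', q')) \<in> set M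
     \<and> (e, u) \<in> set (dia p p' :: ('k, 'x word) lc) \<and> (f, v) \<in> set (dia q q' :: ('k, 'x word) lc)"
  using assms unfolding tmul_def by (auto simp: case_prod_beta) blast

lemma Delta_inv:
  shows "\<forall>c p q. (c, (p, q)) \<in> set (Delta w :: ('k::comm_ring_1, 'x word \<times> 'x word) lc) \<longrightarrow>
      nwf p \<and> nwf q \<and> ndeg p + ndeg q = ndeg w \<and> (w \<noteq> [] \<longrightarrow> 0 < ndeg q)"
  and "\<forall>c p q. (c, (p, q)) \<in> set (Delta_atom a :: ('k::comm_ring_1, 'x word \<times> 'x word) lc) \<longrightarrow>
      nwf p \<and> nwf q \<and> ndeg p + ndeg q = ndeg_atom a \<and> 0 < ndeg q"
proof (induction w and a rule: Delta_Delta_atom.induct)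
  case 1 then show ?case by simp
next
  case (2 a w)
  show ?case
  proof (intro allI impI)
    fix c u v assume "(c, (u, v)) \<in> set (Delta (a # w) :: ('k::comm_ring_1, 'x word \<times> 'x word) lc)"
    then obtain c1 p q d p' q' e f where m1: "(c1, (p, q)) \<in> set (Delta_atom a :: ('k, 'x word \<times> 'x word) lc)"
      and m2: "(d, (p', q')) \<in> set (Delta w :: ('k, 'x word \<times> 'x word) lc)"
      and m3: "(e, u) \<in> set (dia p p' :: ('k, 'x word) lc)" and m4: "(f, v) \<in> set (dia q q' :: ('k, 'x word) lc)"
      using tmul_mem by fastforce
    have h1: "nwf p \<and> nwf q \<and> ndeg p + ndeg q = ndeg_atom a \<and> 0 < ndeg q" using 2(1) m1 by blast
    have h2: "nwf p' \<and> nwf q' \<and> ndeg p' + ndeg q' = ndeg w" using 2(2) m2 by blast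
    have "nwf u \<and> ndeg u = ndeg p + ndeg p'" using dia_mem m3 h1 h2 by blast
    moreover have "nwf v \<and> ndeg v = ndeg q + ndeg q'" using dia_mem m4 h1 h2 by blast
    ultimately show "nwf u \<and> nwf v \<and> ndeg u + ndeg v = ndeg (a # w) \<and> (a # w \<noteq> [] \<longrightarrow> 0 < ndeg v)"
      using h1 h2 by simp
  qed
next
  case (3 x) then show ?case by simp
next
  case (4 u) then show ?case by fastforce
qed

lemma lc_coeff_mem: "lc_coeff L z \<noteq> 0 \<Longrightarrow> \<exists>c. (c, z) \<in> set L"
  unfolding lc_coeff_def by (induction L) (auto split: if_splits)

theorem mainTheorem10:
  fixes n :: nat
  shows "DeltaN ` (Ncomp n :: ('x word \<Rightarrow> 'k::comm_ring_1) set) \<subseteq> Target n"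
proof
  fix T assume "T \<in> DeltaN ` (Ncomp n :: ('x word \<Rightarrow> 'k::comm_ring_1) set)"
  then obtain a :: "'x word \<Rightarrow> 'k" where a: "a \<in> Ncomp n" and T: "T = DeltaN a" by blast
  have fin: "finite {w. a w \<noteq> 0}" and deg: "\<And>w. a w \<noteq> 0 \<Longrightarrow> ndeg w = n"
    using a unfolding Ncomp_def by blast+
  have supp: "\<exists>w c. a w \<noteq> 0 \<and> (c, z) \<in> set (Delta w :: ('k, 'x word \<times> 'x word) lc)" if "T z \<noteq> 0" for z
  proof (rule ccontr)
    assume nt: "\<not> ?thesis"
    have "lc_coeff (Delta w :: ('k, 'x word \<times> 'x word) lc) z = 0" if aw: "a w \<noteq> 0" for w
    proof (rule ccontr)
      assume "lc_coeff (Delta w :: ('k, 'x word \<times> 'x word) lc) z \<noteq> 0"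
      then obtain c where "(c, z) \<in> set (Delta w :: ('k, 'x word \<times> 'x word) lc)"
        using lc_coeff_mem by metis
      then show False using nt aw by blast
    qed
    then have "T z = 0" unfolding T DeltaN_def by (intro sum.neutral) auto
    with that show False by simp
  qed
  have "{z. T z \<noteq> 0} \<subseteq> (\<Union>w\<in>{w. a w \<noteq> 0}. snd ` set (Delta w :: ('k, 'x word \<times> 'x word) lc))"
  proof
    fix z assume "z \<in> {z. T z \<noteq> 0}"
    then obtain w c where "a w \<noteq> 0" "(c, z) \<in> set (Delta w :: ('k, 'x word \<times> 'x word) lc)"
      using supp by blast
    then show "z \<in> (\<Union>w\<in>{w. a w \<noteq> 0}. snd ` set (Delta w :: ('k, 'x word \<times> 'x word) lc))"
      by force
  qed
  moreover have "finite (\<Union>w\<in>{w. a w \<noteq> 0}. snd ` set (Delta w :: ('k, 'x word \<times> 'x word) lc))"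
    using fin by (intro finite_UN_I) auto
  ultimately have f: "finite {z. T z \<noteq> 0}" by (rule finite_subset)
  have "z \<in> tens_basis 0 n \<union> (\<Union>{tens_basis p q | p q. p + q = n \<and> 0 < p \<and> 0 < q})"
    if Tz: "T z \<noteq> 0" for z
  proof -
    obtain w c where aw: "a w \<noteq> 0" and m: "(c, z) \<in> set (Delta w :: ('k, 'x word \<times> 'x word) lc)"
      using supp[OF Tz] by blast
    obtain p q where z: "z = (p, q)" by (cases z)
    have h: "nwf p \<and> nwf q \<and> ndeg p + ndeg q = n \<and> (w \<noteq> [] \<longrightarrow> 0 < ndeg q)"
      using Delta_inv(1)[of w] m z deg[OF aw] by blast
    show ?thesis
    proof (cases "ndeg p = 0")
      case True then show ?thesis using h z by (simp add: tens_basis_def)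
    next
      case False
      then have "w \<noteq> []" using h deg[OF aw] by auto
      then have "z \<in> tens_basis (ndeg p) (ndeg q)" using h z by (simp add: tens_basis_def)
      moreover have "tens_basis (ndeg p) (ndeg q) \<in> {tens_basis p q | p q. p + q = n \<and> 0 < p \<and> 0 < q}"
        using h False \<open>w \<noteq> []\<close> by (rule_tac CollectI, rule_tac exI[of _ "ndeg p"], rule_tac exI[of _ "ndeg q"]) simp
      ultimately show ?thesis by (intro UnI2 UnionI)
    qed
  qed
  then show "T \<in> Target n" using f by (auto simp: Target_def)
qed

end
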